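(* Let $f:\mathbb{R}^n_{>0}\to\mathbb{R}^n_{>0}$ be order-preserving and homogeneous, and let $J$ be a nonempty proper subset of $[n]$. Then there exists $x\in\mathbb{R}^n_{>0}$ such that $$\max_{j\in J}\frac{f(x)_j}{x_j}<\min_{i\in[n]\setminus J}\frac{f(x)_i}{x_i}$$ if and only if $r(f^J_0)<\lambda(f^{[n]\setminus J}_\infty)$.
   Context: $[n]=\{1,\dots,n\}$; entrywise order. Order-preserving: $x\le y\Rightarrow f(x)\le f(y)$; homogeneous: $f(tx)=tf(x)$ for $t>0$. $f$ extends continuously to order-preserving homogeneous maps $\mathbb{R}^n_{\ge0}\to\mathbb{R}^n_{\ge0}$ and $(0,\infty]^n\to(0,\infty]^n$, again denoted $f$. $P^J_\alpha(x)_j=x_j$ for $j\in J$, $\alpha$ otherwise; $f^J_0=P^J_0fP^J_0$, $f^J_\infty=P^J_\infty fP^J_\infty$. For $g$ order-preserving homogeneous on $\mathbb{R}^n_{\ge0}$ or $(0,\infty]^n$: $r(g)=\inf_{x\in\mathbb{R}^n_{>0}}\max_ig(x)_i/x_i$, $\lambda(g)=\sup_{x\in\mathbb{R}^n_{>0}}\min_ig(x)_i/x_i$ (values in $[0,\infty]$). *)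

theory Defs
  imports "HOL-Analysis.Analysis"
begin

text \<open>Vectors in R^n are modelled as real^'n for a finite index type 'n (so [n] = UNIV).\<close>

definition pos_vec :: "real^'n \<Rightarrow> bool" where
  "pos_vec x \<longleftrightarrow> (\<forall>i. 0 < x $ i)"

definition nonneg_vec :: "real^'n \<Rightarrow> bool" where
  "nonneg_vec x \<longleftrightarrow> (\<forall>i. 0 \<le> x $ i)"

definition order_preserving_pos :: "(real^'n \<Rightarrow> real^'n) \<Rightarrow> bool" where
  "order_preserving_pos f \<longleftrightarrow>
     (\<forall>x y. pos_vec x \<and> pos_vec y \<and> (\<forall>i. x $ i \<le> y $ i) \<longrightarrow> (\<forall>i. f x $ i \<le> f y $ i))"

definition homogeneous_pos :: "(real^'n \<Rightarrow> real^'n) \<Rightarrow> bool" where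
  "homogeneous_pos f \<longleftrightarrow> (\<forall>x t. pos_vec x \<and> 0 < t \<longrightarrow> f (t *\<^sub>R x) = t *\<^sub>R f x)"

text \<open>Continuous extension to the closed cone R^n_{\<ge>0}:
  f(x) = lim_{eps -> 0+} f(x + eps 1), which by monotonicity is the infimum.\<close>
definition ext0 :: "(real^'n \<Rightarrow> real^'n) \<Rightarrow> real^'n \<Rightarrow> real^'n" where
  "ext0 f x = (\<chi> i. Inf {f (x + (\<chi> j. e)) $ i | e. 0 < e})"

text \<open>Continuous extension to (0,\<infinity>]^n: f(x) = lim_{t -> \<infinity>} f(min(x, t 1)),
  by monotonicity the supremum.\<close>
definition ext_inf :: "(real^'n \<Rightarrow> real^'n) \<Rightarrow> ereal^'n \<Rightarrow> ereal^'n" where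
  "ext_inf f x = (\<chi> i. SUP t\<in>{0<..}. ereal (f (\<chi> j. real_of_ereal (min (x $ j) (ereal t))) $ i))"

definition P0 :: "'n set \<Rightarrow> real^'n \<Rightarrow> real^'n" where
  "P0 J x = (\<chi> j. if j \<in> J then x $ j else 0)"

definition Pinf :: "'n set \<Rightarrow> ereal^'n \<Rightarrow> ereal^'n" where
  "Pinf J x = (\<chi> j. if j \<in> J then x $ j else \<infinity>)"

definition f0 :: "'n set \<Rightarrow> (real^'n \<Rightarrow> real^'n) \<Rightarrow> real^'n \<Rightarrow> real^'n" where
  "f0 J f = P0 J \<circ> ext0 f \<circ> P0 J"

definition finf :: "'n set \<Rightarrow> (real^'n \<Rightarrow> real^'n) \<Rightarrow> ereal^'n \<Rightarrow> ereal^'n" where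
  "finf J f = Pinf J \<circ> ext_inf f \<circ> Pinf J"

definition cw_r :: "(real^'n::finite \<Rightarrow> real^'n) \<Rightarrow> ereal" where
  "cw_r g = (INF x\<in>{x. pos_vec x}. Max (range (\<lambda>i. ereal (g x $ i / x $ i))))"

definition cw_lambda :: "(ereal^'n::finite \<Rightarrow> ereal^'n) \<Rightarrow> ereal" where
  "cw_lambda g = (SUP x\<in>{x. pos_vec x}.
      Min (range (\<lambda>i. g (\<chi> j. ereal (x $ j)) $ i / ereal (x $ i))))"

end

theory Submission
  imports Defs
begin

lemma mono_f:
  assumes "order_preserving_pos f" "pos_vec x" "pos_vec y" "\<And>i. x $ i \<le> y $ i"
  shows "f x $ i \<le> f y $ i"
  using assms unfolding order_preserving_pos_def by blast

lemma hom_f: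
  assumes "homogeneous_pos f" "pos_vec x" "0 < t"
  shows "f (t *\<^sub>R x) $ i = t * f x $ i"
  using assms unfolding homogeneous_pos_def by simp

lemma ext0_nonneg:
  assumes "\<And>x. pos_vec x \<Longrightarrow> pos_vec (f x)" "nonneg_vec y"
  shows "0 \<le> ext0 f y $ i"
proof -
  have pv: "pos_vec (y + (\<chi> j. e))" if "0 < e" for e
    using assms(2) that unfolding pos_vec_def nonneg_vec_def by (simp add: add_nonneg_pos)
  show ?thesis unfolding ext0_def
    apply simp
    apply (rule cInf_greatest)
    using pv assms(1) unfolding pos_vec_def
     apply (auto intro: less_imp_le)
    using zero_less_one by blast
qed

lemma ext0_le:
  assumes fpos: "\<And>x. pos_vec x \<Longrightarrow> pos_vec (f x)" and op: "order_preserving_pos f"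
    and hom: "homogeneous_pos f" and x: "pos_vec x"
  shows "ext0 f (P0 J x) $ j \<le> f x $ j"
proof -
  define m where "m = Min (range (\<lambda>i. x $ i))"
  have m: "0 < m" "\<And>i. m \<le> x $ i" using x unfolding m_def pos_vec_def by auto
  define S where "S = {f (P0 J x + (\<chi> j. e)) $ j | e. 0 < e}"
  have pv: "pos_vec (P0 J x + (\<chi> j. e))" if "0 < e" for e
    using x that unfolding pos_vec_def P0_def by (auto simp: add_nonneg_pos less_imp_le)
  have bdd: "bdd_below S" unfolding S_def bdd_below_def
    using pv fpos unfolding pos_vec_def by (auto intro!: exI[of _ 0] less_imp_le)
  have fxj: "0 < f x $ j" using fpos x unfolding pos_vec_def by auto
  have key: "Inf S \<le> f x $ j + d" if "0 < d" for d
  proof -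
    define e where "e = d * m / f x $ j"
    have e: "0 < e" using that m fxj unfolding e_def by auto
    have "Inf S \<le> f (P0 J x + (\<chi> j. e)) $ j"
      apply (rule cInf_lower) using bdd e unfolding S_def by auto
    also have "\<dots> \<le> f ((1 + e / m) *\<^sub>R x) $ j"
    proof (rule mono_f[OF op pv[OF e]])
      show "pos_vec ((1 + e / m) *\<^sub>R x)" using x e m unfolding pos_vec_def
        by (simp add: add_pos_pos)
      fix i
      have h: "e \<le> e / m * x $ i"
        using m(1) m(2)[of i] e by (simp add: field_simps)
      have xi: "0 < x $ i" using x unfolding pos_vec_def by auto
      show "(P0 J x + (\<chi> j. e)) $ i \<le> ((1 + e / m) *\<^sub>R x) $ i"
        using h xi unfolding P0_def by (cases "i \<in> J") (auto simp: algebra_simps)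
    qed
    also have "\<dots> = (1 + e / m) * f x $ j"
      using hom_f[OF hom x] e m by (simp add: add_pos_pos)
    also have "\<dots> = f x $ j + d" unfolding e_def using m fxj by (simp add: field_simps)
    finally show ?thesis .
  qed
  have "Inf S \<le> f x $ j" by (rule field_le_epsilon) (use key in auto)
  then show ?thesis unfolding ext0_def S_def by simp
qed

lemma w_eq:
  "(\<chi> j. real_of_ereal (min (Pinf K (\<chi> j. ereal (z $ j)) $ j) (ereal t))) $ j
   = (if j \<in> K then min (z $ j) t else t)"
  unfolding Pinf_def by (auto simp: min_def)

lemma extinf_ge:
  assumes op: "order_preserving_pos f" and x: "pos_vec x"
  shows "ereal (f x $ i) \<le> ext_inf f (Pinf K (\<chi> j. ereal (x $ j))) $ i"
proof -
  define t where "t = Max (range (\<lambda>i. x $ i))"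
  have t: "0 < t" "\<And>j. x $ j \<le> t" using x unfolding t_def pos_vec_def
    by (auto intro: less_le_trans[OF _ Max_ge])
  define v where "v = (\<chi> j. real_of_ereal (min (Pinf K (\<chi> j. ereal (x $ j)) $ j) (ereal t)))"
  have v: "v $ j = x $ j \<or> v $ j = t" for j unfolding v_def w_eq using t by auto
  have vp: "pos_vec v" using v t x unfolding pos_vec_def by metis
  have "f x $ i \<le> f v $ i"
    apply (rule mono_f[OF op x vp]) using v t by (metis order_refl)
  also have "ereal (f v $ i) \<le> ext_inf f (Pinf K (\<chi> j. ereal (x $ j))) $ i"
    unfolding ext_inf_def v_def using t by (auto intro!: SUP_upper)
  finally show ?thesis by simp
qed

lemma forward:
  fixes f :: "real^'n::finite \<Rightarrow> real^'n" and J :: "'n set"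
  assumes fpos: "\<And>x. pos_vec x \<Longrightarrow> pos_vec (f x)"
    and op: "order_preserving_pos f"
    and hom: "homogeneous_pos f"
    and J: "J \<noteq> {}" "J \<noteq> UNIV"
    and x: "pos_vec x"
    and ab: "Max ((\<lambda>j. f x $ j / x $ j) ` J) < Min ((\<lambda>i. f x $ i / x $ i) ` (- J))"
  shows "cw_r (f0 J f) < cw_lambda (finf (- J) f)"
proof -
  define a where "a = Max ((\<lambda>j. f x $ j / x $ j) ` J)"
  define b where "b = Min ((\<lambda>i. f x $ i / x $ i) ` (- J))"
  have xp: "0 < x $ i" for i using x unfolding pos_vec_def by auto
  have fxp: "0 < f x $ i" for i using fpos[OF x] unfolding pos_vec_def by auto
  have aj: "f x $ j / x $ j \<le> a" if "j \<in> J" for j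
    unfolding a_def using that by (auto intro!: Max_ge)
  obtain j0 where "j0 \<in> J" using J by auto
  have a0: "0 \<le> a" using aj[OF \<open>j0 \<in> J\<close>] fxp[of j0] xp[of j0]
    by (smt (verit) divide_pos_pos)
  have bi: "b \<le> f x $ i / x $ i" if "i \<notin> J" for i
    unfolding b_def using that by (auto intro!: Min_le)
  have "cw_r (f0 J f) \<le> Max (range (\<lambda>i. ereal (f0 J f x $ i / x $ i)))"
    unfolding cw_r_def using x by (auto intro!: INF_lower)
  also have "\<dots> \<le> ereal a"
  proof (subst Max_le_iff, simp, simp, clarify)
    fix i
    show "ereal (f0 J f x $ i / x $ i) \<le> ereal a"
    proof (cases "i \<in> J")
      case True
      have "f0 J f x $ i = ext0 f (P0 J x) $ i" unfolding f0_def using True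
        by (simp add: P0_def)
      also have "\<dots> \<le> f x $ i" by (rule ext0_le[OF fpos op hom x])
      finally have "f0 J f x $ i / x $ i \<le> f x $ i / x $ i"
        using xp[of i] by (simp add: divide_right_mono)
      then show ?thesis using aj[OF True] by simp
    next
      case False
      then show ?thesis unfolding f0_def using a0 by (simp add: P0_def)
    qed
  qed
  also have "ereal a < ereal b" using ab unfolding a_def b_def by simp
  also have "ereal b \<le> Min (range (\<lambda>i. finf (- J) f (\<chi> j. ereal (x $ j)) $ i / ereal (x $ i)))"
  proof (subst Min_ge_iff, simp, simp, clarify)
    fix i
    show "ereal b \<le> finf (- J) f (\<chi> j. ereal (x $ j)) $ i / ereal (x $ i)"
    proof (cases "i \<in> J")
      case True
      then show ?thesis unfolding finf_def using xp[of i] by (simp add: Pinf_def)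
    next
      case False
      have "ereal b \<le> ereal (f x $ i / x $ i)" using bi[OF False] by simp
      also have "\<dots> = ereal (f x $ i) / ereal (x $ i)" using xp[of i] by simp
      also have "\<dots> \<le> ext_inf f (Pinf (- J) (\<chi> j. ereal (x $ j))) $ i / ereal (x $ i)"
        by (rule ereal_divide_right_mono[OF extinf_ge[OF op x]]) (use xp[of i] in simp)
      also have "\<dots> = finf (- J) f (\<chi> j. ereal (x $ j)) $ i / ereal (x $ i)"
        unfolding finf_def using False by (simp add: Pinf_def)
      finally show ?thesis .
    qed
  qed
  also have "\<dots> \<le> cw_lambda (finf (- J) f)"
    unfolding cw_lambda_def using x by (auto intro!: SUP_upper)
  finally show ?thesis .
qed

lemma backward:
  fixes f :: "real^'n::finite \<Rightarrow> real^'n" and J :: "'n set"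
  assumes fpos: "\<And>x. pos_vec x \<Longrightarrow> pos_vec (f x)"
    and op: "order_preserving_pos f"
    and hom: "homogeneous_pos f"
    and J: "J \<noteq> {}" "J \<noteq> UNIV"
    and rl: "cw_r (f0 J f) < cw_lambda (finf (- J) f)"
  shows "\<exists>x. pos_vec x \<and>
            Max ((\<lambda>j. f x $ j / x $ j) ` J) < Min ((\<lambda>i. f x $ i / x $ i) ` (- J))"
proof -
  obtain y where y: "pos_vec y"
    and y1: "Max (range (\<lambda>i. ereal (f0 J f y $ i / y $ i))) < cw_lambda (finf (- J) f)"
    using rl unfolding cw_r_def by (auto simp: INF_less_iff)
  then obtain z where z: "pos_vec z" and yz: "Max (range (\<lambda>i. ereal (f0 J f y $ i / y $ i)))
     < Min (range (\<lambda>i. finf (- J) f (\<chi> j. ereal (z $ j)) $ i / ereal (z $ i)))"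
    unfolding cw_lambda_def by (auto simp: less_SUP_iff)
  then obtain c where c1: "Max (range (\<lambda>i. ereal (f0 J f y $ i / y $ i))) < ereal c"
    and c2: "ereal c < Min (range (\<lambda>i. finf (- J) f (\<chi> j. ereal (z $ j)) $ i / ereal (z $ i)))"
    using ereal_dense2 by blast
  have yp: "0 < y $ i" for i using y unfolding pos_vec_def by auto
  have zp: "0 < z $ i" for i using z unfolding pos_vec_def by auto
  have cy: "ereal (f0 J f y $ i / y $ i) < ereal c" for i
    using c1 by (simp add: Max_less_iff)
  obtain i0 where i0: "i0 \<notin> J" using J by auto
  have cpos: "0 < c" using cy[of i0] i0 unfolding f0_def by (simp add: P0_def)
  have cz: "ereal c < finf (- J) f (\<chi> j. ereal (z $ j)) $ i / ereal (z $ i)" for i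
    using c2 by (simp add: Min_gr_iff)
  have "\<exists>e>0. f (P0 J y + (\<chi> j. e)) $ j < c * y $ j" if j: "j \<in> J" for j
  proof -
    define S where "S = {f (P0 J y + (\<chi> j. e)) $ j | e. 0 < e}"
    have pv: "pos_vec (P0 J y + (\<chi> j. e))" if "0 < e" for e
      using yp that unfolding pos_vec_def P0_def by (auto simp: add_nonneg_pos less_imp_le)
    have bdd: "bdd_below S" unfolding S_def bdd_below_def
      using pv fpos unfolding pos_vec_def by (auto intro!: exI[of _ 0] less_imp_le)
    have ne: "S \<noteq> {}" unfolding S_def using zero_less_one by blast
    have "f0 J f y $ j = Inf S" unfolding f0_def S_def ext0_def using j by (simp add: P0_def)
    then have "Inf S < c * y $ j" using cy[of j] yp[of j] by (simp add: divide_less_eq)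
    then obtain s where "s \<in> S" "s < c * y $ j" using cInf_less_iff[OF ne bdd] by auto
    then show ?thesis unfolding S_def by auto
  qed
  then obtain E where E: "\<And>j. j \<in> J \<Longrightarrow> 0 < E j \<and> f (P0 J y + (\<chi> k. E j)) $ j < c * y $ j"
    by metis
  define e where "e = Min (E ` J)"
  have e: "0 < e" "\<And>j. j \<in> J \<Longrightarrow> e \<le> E j" unfolding e_def using E J by auto
  define u where "u = P0 J y + (\<chi> j. e)"
  have upv: "pos_vec u" using yp e unfolding pos_vec_def P0_def u_def
    by (auto simp: add_nonneg_pos less_imp_le)
  have uJ: "u $ j = y $ j + e" if "j \<in> J" for j using that unfolding u_def P0_def by simp
  have uK: "u $ j = e" if "j \<notin> J" for j using that unfolding u_def P0_def by simp
  have fu: "f u $ j < c * y $ j" if j: "j \<in> J" for j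
  proof -
    have "f u $ j \<le> f (P0 J y + (\<chi> k. E j)) $ j"
      apply (rule mono_f[OF op upv])
      using yp E[OF j] e(2)[OF j] unfolding pos_vec_def P0_def u_def
      by (auto simp: add_nonneg_pos less_imp_le)
    then show ?thesis using E[OF j] by simp
  qed
  define W where "W t = (\<chi> j. real_of_ereal (min (Pinf (- J) (\<chi> j. ereal (z $ j)) $ j) (ereal t)))" for t
  have Wj: "W t $ j = (if j \<in> - J then min (z $ j) t else t)" for t j unfolding W_def by (rule w_eq)
  have Wp: "pos_vec (W t)" if "0 < t" for t using that zp unfolding pos_vec_def Wj by auto
  have "\<exists>t>0. c * z $ i < f (W t) $ i" if i: "i \<notin> J" for i
  proof -
    have "ereal c < ext_inf f (Pinf (- J) (\<chi> j. ereal (z $ j))) $ i / ereal (z $ i)"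
      using cz[of i] i unfolding finf_def by (simp add: Pinf_def)
    then have "ereal c * ereal (z $ i) < ext_inf f (Pinf (- J) (\<chi> j. ereal (z $ j))) $ i"
      using zp[of i] by (simp add: ereal_less_divide_iff)
    then have "ereal (c * z $ i) < (SUP t\<in>{0<..}. ereal (f (W t) $ i))"
      unfolding ext_inf_def W_def by simp
    then show ?thesis by (auto simp: less_SUP_iff)
  qed
  then obtain T where T: "\<And>i. i \<notin> J \<Longrightarrow> 0 < T i \<and> c * z $ i < f (W (T i)) $ i"
    by metis
  define t where "t = Max (T ` (- J))"
  have t2: "\<And>i. i \<notin> J \<Longrightarrow> T i \<le> t" unfolding t_def by (auto intro!: Max_ge)
  have t: "0 < t" "\<And>i. i \<notin> J \<Longrightarrow> T i \<le> t"
    using T[OF i0] t2[OF i0] t2 by auto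
  define w where "w = W t"
  have wpv: "pos_vec w" unfolding w_def using Wp t by auto
  have wp: "0 < w $ i" for i using wpv unfolding pos_vec_def by auto
  have fw: "c * w $ i < f w $ i" if i: "i \<notin> J" for i
  proof -
    have "f (W (T i)) $ i \<le> f w $ i"
      apply (rule mono_f[OF op Wp]) using T[OF i] t(2)[OF i] i wpv unfolding w_def Wj by (auto simp: min_def)
    moreover have "w $ i \<le> z $ i" using i unfolding w_def Wj by auto
    ultimately show ?thesis using T[OF i] cpos by (smt (verit) mult_left_mono)
  qed
  define mu where "mu = Min (range (\<lambda>i. u $ i))"
  define Mw where "Mw = Max (range (\<lambda>i. w $ i))"
  have mu: "0 < mu" "\<And>i. mu \<le> u $ i" using upv unfolding mu_def pos_vec_def by auto
  have Mw2: "\<And>i. w $ i \<le> Mw" unfolding Mw_def by auto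
  have Mw: "0 < Mw" "\<And>i. w $ i \<le> Mw" using wp[of i0] Mw2[of i0] Mw2 by (auto intro: less_le_trans)
  define \<beta> where "\<beta> = min (mu / t) (e / Mw)"
  have bp: "0 < \<beta>" unfolding \<beta>_def using mu Mw t e by auto
  define x where "x = (\<chi> k. if k \<in> J then u $ k else \<beta> * w $ k)"
  have xpv: "pos_vec x" unfolding x_def pos_vec_def using upv wp bp unfolding pos_vec_def by auto
  have xp: "0 < x $ i" for i using xpv unfolding pos_vec_def by auto
  have xu: "x $ k \<le> u $ k" for k
  proof (cases "k \<in> J")
    case False
    have "\<beta> * w $ k \<le> (e / Mw) * Mw" using bp Mw wp[of k]
      by (intro mult_mono) (auto simp: \<beta>_def)
    then show ?thesis using False Mw uK[OF False] unfolding x_def by simp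
  qed (simp add: x_def)
  have bwx: "(\<beta> *\<^sub>R w) $ k \<le> x $ k" for k
  proof (cases "k \<in> J")
    case True
    have "\<beta> * w $ k = \<beta> * t" using True unfolding w_def Wj by simp
    also have "\<dots> \<le> (mu / t) * t" using t bp by (intro mult_right_mono) (auto simp: \<beta>_def)
    also have "\<dots> \<le> u $ k" using t mu by simp
    finally show ?thesis using True unfolding x_def by simp
  qed (simp add: x_def)
  have xJ: "f x $ j / x $ j < c" if j: "j \<in> J" for j
  proof -
    have "f x $ j \<le> f u $ j" by (rule mono_f[OF op xpv upv xu])
    also have "\<dots> < c * y $ j" by (rule fu[OF j])
    also have "\<dots> \<le> c * x $ j" using cpos e j uJ[OF j] unfolding x_def by simp
    finally show ?thesis using xp[of j] by (simp add: divide_less_eq)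
  qed
  have xK: "c < f x $ i / x $ i" if i: "i \<notin> J" for i
  proof -
    have "c * x $ i = \<beta> * (c * w $ i)" using i unfolding x_def by simp
    also have "\<dots> < \<beta> * f w $ i" using fw[OF i] bp by simp
    also have "\<dots> = f (\<beta> *\<^sub>R w) $ i" using hom_f[OF hom wpv bp] by simp
    also have "\<dots> \<le> f x $ i"
      by (rule mono_f[OF op _ xpv bwx]) (use wp bp in \<open>simp add: pos_vec_def\<close>)
    finally show ?thesis using xp[of i] by (simp add: less_divide_eq)
  qed
  have "Max ((\<lambda>j. f x $ j / x $ j) ` J) < c" using J xJ by (simp add: Max_less_iff)
  also have "c < Min ((\<lambda>i. f x $ i / x $ i) ` (- J))" using i0 xK by (subst Min_gr_iff) auto
  finally show ?thesis using xpv by blast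
qed

theorem lemma3p3:
  fixes f :: "real^'n::finite \<Rightarrow> real^'n" and J :: "'n set"
  assumes "\<And>x. pos_vec x \<Longrightarrow> pos_vec (f x)"
    and "order_preserving_pos f"
    and "homogeneous_pos f"
    and "J \<noteq> {}" and "J \<noteq> UNIV"
  shows "(\<exists>x. pos_vec x \<and>
            Max ((\<lambda>j. f x $ j / x $ j) ` J) < Min ((\<lambda>i. f x $ i / x $ i) ` (- J)))
         \<longleftrightarrow> cw_r (f0 J f) < cw_lambda (finf (- J) f)"
  using forward[OF assms] backward[OF assms] by blast

end
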